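(* Fix constants $c>0$, $g>0$, $A>0$, $Q\in\mathbb{R}$ and $\widetilde Z\in\mathbb{R}$, and set $U=Q/A$. For positive integrable functions $f:\mathbb{R}\to(0,\infty)$ define the kinetic energy functional $$\mathcal E(f)=\int_{\mathbb{R}}\left(\frac{\xi^2}{2}f(\xi)+c^2f(\xi)\log f(\xi)+c^2 f(\xi)\log\!\big(c\sqrt{2\pi}\big)+g\widetilde Z f(\xi)\right)d\xi .$$ Consider the minimization problem $\min\mathcal E(f)$ under the constraints $$f>0,\qquad \int_{\mathbb{R}}f(\xi)\,d\xi=A,\qquad \int_{\mathbb{R}}\xi f(\xi)\,d\xi=Q .$$ Then the minimum is attained (a.e.) by the function $$\mathcal M(\xi)=\frac{A}{c}\,\chi\!\left(\frac{\xi-U}{c}\right),\qquad \chi(w)=\frac{1}{\sqrt{2\pi}}\exp\!\left(-\frac{w^2}{2}\right),$$ and the minimal energy is $$\mathcal E(\mathcal M)=\frac{Q^2}{2A}+c^2A\ln A+gA\widetilde Z .$$ Moreover, if $A=A(X)>0$ and $\widetilde Z=\widetilde Z(X)$ depend (smoothly) on $X$ and form a still water steady state, i.e. $Q=0$ (so $U=0$) and $c^2\ln A(X)+g\widetilde Z(X)$ is constant in $X$, then $\mathcal M(X,\xi)=\frac{A(X)}{c}\chi\!\left(\frac{\xi}{c}\right)$ satisfies $$\xi\,\partial_X\mathcal M-g\,\partial_X\widetilde Z\,\partial_\xi\mathcal M=0 .$$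
   Context: Here $A$ is the equivalent wet area, $Q$ the equivalent discharge, $c$ the sonic speed, $g$ gravity and $\widetilde Z$ the pseudo-altitude of a pressurised pipe-flow model $\partial_tA+\partial_XQ=0$, $\partial_tQ+\partial_X(Q^2/A+c^2A)+g\partial_X\widetilde Z=0$. A still water steady state of this model is a state with $U=Q/A=0$ and $c^2\ln A+g\widetilde Z=\text{const}$. $\log$ and $\ln$ denote the natural logarithm. *)

theory Defs
  imports "HOL-Analysis.Analysis"
begin

definition chi :: "real \<Rightarrow> real" where
  "chi w = exp (- (w ^ 2) / 2) / sqrt (2 * pi)"

definition maxwellian :: "real \<Rightarrow> real \<Rightarrow> real \<Rightarrow> real \<Rightarrow> real" where
  "maxwellian c A U \<xi> = A / c * chi ((\<xi> - U) / c)"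

definition energy_density :: "real \<Rightarrow> real \<Rightarrow> real \<Rightarrow> (real \<Rightarrow> real) \<Rightarrow> real \<Rightarrow> real" where
  "energy_density c g Z f \<xi> =
     \<xi>\<^sup>2 / 2 * f \<xi> + c\<^sup>2 * f \<xi> * ln (f \<xi>) + c\<^sup>2 * f \<xi> * ln (c * sqrt (2 * pi)) + g * Z * f \<xi>"

definition energy :: "real \<Rightarrow> real \<Rightarrow> real \<Rightarrow> (real \<Rightarrow> real) \<Rightarrow> real" where
  "energy c g Z f = (\<integral>\<xi>. energy_density c g Z f \<xi> \<partial>lborel)"

end

theory Submission
  imports Defs "HOL-Probability.Probability"
begin

lemma maxw_eq:
  assumes "c > 0"
  shows "maxwellian c A U x = A * normal_density U c x"
proof -
  have "sqrt (2 * pi * c\<^sup>2) = c * sqrt (2*pi)"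
    using assms by (simp add: real_sqrt_mult)
  moreover have "((x - U) / c)\<^sup>2 / 2 = (x - U)\<^sup>2 / (2 * c\<^sup>2)"
    using assms by (simp add: power_divide)
  ultimately show ?thesis
    unfolding maxwellian_def chi_def normal_density_def
    by (simp add: field_simps)
qed

lemma ln_maxw:
  assumes "c > 0" "A > 0"
  shows "ln (maxwellian c A U x) = ln A - ln (c * sqrt (2*pi)) - (x - U)\<^sup>2 / (2 * c\<^sup>2)"
proof -
  have "maxwellian c A U x = A / (c * sqrt (2*pi)) * exp (-(x - U)\<^sup>2 / (2 * c\<^sup>2))"
    using assms unfolding maxwellian_def chi_def
    by (simp add: power_divide field_simps)
  then show ?thesis using assms
    by (simp add: ln_mult ln_div)
qed

lemma maxw_pos: "c > 0 \<Longrightarrow> A > 0 \<Longrightarrow> maxwellian c A U x > 0"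
  by (simp add: maxw_eq normal_density_pos)

lemma ed_maxw:
  assumes "c > 0" "A > 0"
  shows "energy_density c g Z (maxwellian c A U) x
     = maxwellian c A U x * (x * U + (- U\<^sup>2/2 + c\<^sup>2 * ln A + g * Z))"
  unfolding energy_density_def ln_maxw[OF assms]
  using assms by (simp add: field_simps power2_eq_square)

lemma ed_ineq:
  assumes "c > 0" "A > 0" "f x > 0"
  shows "energy_density c g Z f x \<ge>
     c\<^sup>2 * (f x - maxwellian c A U x) + f x * (x * U + (- U\<^sup>2/2 + c\<^sup>2 * ln A + g * Z))"
proof -
  let ?M = "maxwellian c A U x"
  have M: "?M > 0" using maxw_pos assms by auto
  have "ln (?M / f x) \<le> ?M / f x - 1" by (rule ln_le_minus_one) (use M assms in auto)
  hence "f x * ln (?M / f x) \<le> f x * (?M / f x - 1)"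
    using assms by (simp add: mult_left_mono)
  hence key: "f x * (ln ?M - ln (f x)) \<le> ?M - f x"
    using assms M by (simp add: ln_div right_diff_distrib)
  have "energy_density c g Z f x - (c\<^sup>2 * (f x - ?M) + f x * (x * U + (- U\<^sup>2/2 + c\<^sup>2 * ln A + g * Z)))
     = c\<^sup>2 * ((?M - f x) - f x * (ln ?M - ln (f x)))"
    unfolding energy_density_def ln_maxw[OF assms(1,2)]
    using assms by (simp add: field_simps power2_eq_square)
  also have "\<dots> \<ge> 0" using key by simp
  finally show ?thesis by simp
qed

lemma maxw_int:
  assumes "c > 0"
  shows "integrable lborel (maxwellian c A U)"
    "(\<integral>x. maxwellian c A U x \<partial>lborel) = A"
    "integrable lborel (\<lambda>x. x * maxwellian c A U x)"
    "(\<integral>x. x * maxwellian c A U x \<partial>lborel) = A * U"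
proof -
  have e: "maxwellian c A U = (\<lambda>x. A * normal_density U c x)"
    using maxw_eq[OF assms] by auto
  have e2: "(\<lambda>x. x * maxwellian c A U x) = (\<lambda>x. A * (normal_density U c x * x))"
    using maxw_eq[OF assms] by (auto simp: fun_eq_iff)
  show "integrable lborel (maxwellian c A U)" unfolding e
    using integrable_normal_density[OF assms] by simp
  show "(\<integral>x. maxwellian c A U x \<partial>lborel) = A" unfolding e
    using integral_normal_density[OF assms] by simp
  show "integrable lborel (\<lambda>x. x * maxwellian c A U x)" unfolding e2
    using integrable_normal_moment_nz_1[OF assms] by simp
  show "(\<integral>x. x * maxwellian c A U x \<partial>lborel) = A * U" unfolding e2
    using integral_normal_moment_nz_1[OF assms] by simp
qed

lemma chi_deriv: "(chi has_real_derivative (- w * chi w)) (at w)"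
  unfolding chi_def
  by (auto intro!: derivative_eq_intros simp: field_simps)

lemma still_water:
  fixes AX ZX :: "real \<Rightarrow> real"
  assumes c: "c > 0" and g: "g > 0"
    and pos: "\<forall>X. AX X > 0" and dA: "\<forall>X. AX differentiable (at X)"
    and K: "\<forall>X. c\<^sup>2 * ln (AX X) + g * ZX X = K"
  shows "\<xi> * deriv (\<lambda>Y. maxwellian c (AX Y) 0 \<xi>) X
          - g * deriv ZX X * deriv (\<lambda>\<eta>. maxwellian c (AX X) 0 \<eta>) \<xi> = 0"
proof -
  define a where "a = deriv AX X"
  have hA: "(AX has_real_derivative a) (at X)"
    using dA a_def DERIV_deriv_iff_real_differentiable by blast
  have d1: "((\<lambda>Y. maxwellian c (AX Y) 0 \<xi>) has_real_derivative (a / c * chi (\<xi>/c))) (at X)"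
    unfolding maxwellian_def
    using c by (auto intro!: derivative_eq_intros hA)
  have zx: "ZX = (\<lambda>Y. (K - c\<^sup>2 * ln (AX Y)) / g)"
    using K g by (auto simp: fun_eq_iff field_simps)
  have d2: "(ZX has_real_derivative (- c\<^sup>2 * (a / AX X) / g)) (at X)"
    unfolding zx using pos g
    by (auto intro!: derivative_eq_intros hA simp: field_simps)
  have d3: "((\<lambda>\<eta>. maxwellian c (AX X) 0 \<eta>) has_real_derivative
       (AX X / c * (- (\<xi>/c) * chi (\<xi>/c) * (1/c)))) (at \<xi>)"
  proof -
    have "((\<lambda>x. x / c) has_real_derivative (1/c)) (at \<xi>)"
      using c by (auto intro!: derivative_eq_intros)
    from DERIV_chain2[OF chi_deriv this]
    have "((\<lambda>x. chi (x / c)) has_real_derivative (- (\<xi>/c) * chi (\<xi>/c) * (1/c))) (at \<xi>)" .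
    from DERIV_cmult[OF this, of "AX X / c"] show ?thesis
      unfolding maxwellian_def by simp
  qed
  show ?thesis
    unfolding DERIV_imp_deriv[OF d1] DERIV_imp_deriv[OF d2] DERIV_imp_deriv[OF d3]
    using pos[rule_format, of X] c g
    by (simp add: field_simps power2_eq_square)
qed

theorem theorem3:
  fixes c g A Q Z :: real
  assumes "c > 0" and "g > 0" and "A > 0"
  defines "U \<equiv> Q / A"
  shows
    "((\<forall>\<xi>. maxwellian c A U \<xi> > 0)
      \<and> integrable lborel (maxwellian c A U)
      \<and> integrable lborel (\<lambda>\<xi>. \<xi> * maxwellian c A U \<xi>)
      \<and> integrable lborel (energy_density c g Z (maxwellian c A U))
      \<and> (\<integral>\<xi>. maxwellian c A U \<xi> \<partial>lborel) = A
      \<and> (\<integral>\<xi>. \<xi> * maxwellian c A U \<xi> \<partial>lborel) = Q)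
     \<and> (\<forall>f :: real \<Rightarrow> real.
          (\<forall>\<xi>. f \<xi> > 0)
          \<and> integrable lborel f
          \<and> integrable lborel (\<lambda>\<xi>. \<xi> * f \<xi>)
          \<and> integrable lborel (energy_density c g Z f)
          \<and> (\<integral>\<xi>. f \<xi> \<partial>lborel) = A
          \<and> (\<integral>\<xi>. \<xi> * f \<xi> \<partial>lborel) = Q
          \<longrightarrow> energy c g Z (maxwellian c A U) \<le> energy c g Z f)
     \<and> energy c g Z (maxwellian c A U) = Q\<^sup>2 / (2 * A) + c\<^sup>2 * A * ln A + g * A * Z
     \<and> (\<forall>(AX :: real \<Rightarrow> real) (ZX :: real \<Rightarrow> real).
          (\<forall>X. AX X > 0) \<and> (\<forall>X. AX differentiable (at X)) \<and> (\<forall>X. ZX differentiable (at X))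
          \<and> (\<exists>K. \<forall>X. c\<^sup>2 * ln (AX X) + g * ZX X = K)
          \<longrightarrow> (\<forall>X \<xi>. \<xi> * deriv (\<lambda>Y. maxwellian c (AX Y) 0 \<xi>) X
                      - g * deriv ZX X * deriv (\<lambda>\<eta>. maxwellian c (AX X) 0 \<eta>) \<xi> = 0))"
proof -
  define C where "C = - U\<^sup>2/2 + c\<^sup>2 * ln A + g * Z"
  let ?M = "maxwellian c A U"
  have c: "c > 0" and A: "A > 0" using assms by auto
  note MI = maxw_int[OF c, of A U]
  have AU: "A * U = Q" using A unfolding U_def by simp
  have edM: "energy_density c g Z ?M = (\<lambda>x. U * (x * ?M x) + C * ?M x)"
    using ed_maxw[OF c A] by (auto simp: fun_eq_iff C_def field_simps)
  have edMI: "integrable lborel (energy_density c g Z ?M)"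
    unfolding edM using MI by auto
  have EM: "energy c g Z ?M = U * Q + C * A"
    unfolding energy_def edM using MI AU by simp
  have EM2: "energy c g Z ?M = Q\<^sup>2 / (2 * A) + c\<^sup>2 * A * ln A + g * A * Z"
  proof -
    have "U * Q + C * A = Q\<^sup>2 / (2 * A) + c\<^sup>2 * A * ln A + g * A * Z"
      unfolding C_def U_def using A by (simp add: field_simps power2_eq_square)
    then show ?thesis using EM by simp
  qed
  have part1: "(\<forall>\<xi>. ?M \<xi> > 0) \<and> integrable lborel ?M \<and> integrable lborel (\<lambda>\<xi>. \<xi> * ?M \<xi>)
      \<and> integrable lborel (energy_density c g Z ?M)
      \<and> (\<integral>\<xi>. ?M \<xi> \<partial>lborel) = A \<and> (\<integral>\<xi>. \<xi> * ?M \<xi> \<partial>lborel) = Q"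
    using MI edMI maxw_pos[OF c A] AU by auto
  have part2: "energy c g Z ?M \<le> energy c g Z f"
    if f: "(\<forall>\<xi>. f \<xi> > 0) \<and> integrable lborel f \<and> integrable lborel (\<lambda>\<xi>. \<xi> * f \<xi>)
          \<and> integrable lborel (energy_density c g Z f)
          \<and> (\<integral>\<xi>. f \<xi> \<partial>lborel) = A \<and> (\<integral>\<xi>. \<xi> * f \<xi> \<partial>lborel) = Q" for f
  proof -
    let ?h = "\<lambda>x. c\<^sup>2 * (f x - ?M x) + U * (x * f x) + C * f x"
    have hI: "integrable lborel ?h" using f MI by auto
    have hv: "(\<integral>x. ?h x \<partial>lborel) = U * Q + C * A"
      using f MI hI by (simp add: Bochner_Integration.integral_diff)
    have "(\<integral>x. ?h x \<partial>lborel) \<le> (\<integral>x. energy_density c g Z f x \<partial>lborel)"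
    proof (rule integral_mono)
      show "integrable lborel ?h" by fact
      show "integrable lborel (energy_density c g Z f)" using f by auto
      fix x show "?h x \<le> energy_density c g Z f x"
        using ed_ineq[OF c A, where f=f and x=x and g=g and Z=Z and U=U] f unfolding C_def by (simp add: algebra_simps)
    qed
    then show ?thesis unfolding EM energy_def[of c g Z f] hv .
  qed
  show ?thesis
    using part1 part2 EM2 still_water[OF c assms(2)] by blast
qed

end
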